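(* Let $X$ be a finite connected poset of length $1$ which does not contain a weak crown. Then $\mathcal{AM}(X)=\mathcal{P}(X)$ if and only if $|\mathrm{Min}(X)|=1$ or $|\mathrm{Max}(X)|=1$.
   Context: The length of $X$ is the maximum of $|C|-1$ over chains $C\subseteq X$. A weak $n$-crown ($n\ge2$) is a poset with $2n$ distinct elements $x_1,\dots,x_n,y_1,\dots,y_n$ such that $x_i<y_i$ for $1\le i\le n$, $x_{i+1}<y_i$ for $1\le i\le n-1$, and $x_1<y_n$ (other comparabilities may exist); $X$ contains a weak crown if some subset of $X$ with the induced order is a weak $n$-crown for some $n\ge2$. For $x<y$, $e_{xy}$ denotes the corresponding incidence-algebra basis element and $B=\{e_{xy}:x<y\}$. $\mathcal{C}(X)$ is the set of maximal chains. For a bijection $\theta:B\to B$ and $C:u_1<\dots<u_m$ in $\mathcal{C}(X)$, $\theta$ is increasing on $C$ if there is $D:v_1<\dots<v_m$ in $\mathcal{C}(X)$ with $\theta(e_{u_iu_j})=e_{v_iv_j}$ for all $i<j$, decreasing if $\theta(e_{u_iu_j})=e_{v_{m-j+1}v_{m-i+1}}$ for all $i<j$. $\mathcal{M}(X)$: bijections $B\to B$ increasing or decreasing on every maximal chain. A walk is a sequence $u_0,\dots,u_m$ where for each $i$ one of $u_i,u_{i+1}$ covers the other; closed if $u_0=u_m$. For a closed walk $\Gamma:u_0,\dots,u_m=u_0$ and $z\in X$: $s^+_{\theta,\Gamma}(z)=|\{i: u_i<u_{i+1},\ \exists w>z,\ \theta(e_{zw})=e_{u_iu_{i+1}}\}|$,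 $s^-_{\theta,\Gamma}(z)=|\{i: u_i>u_{i+1},\ \exists w>z,\ \theta(e_{zw})=e_{u_{i+1}u_i}\}|$, $t^+_{\theta,\Gamma}(z)=|\{i: u_i<u_{i+1},\ \exists w<z,\ \theta(e_{wz})=e_{u_iu_{i+1}}\}|$, $t^-_{\theta,\Gamma}(z)=|\{i: u_i>u_{i+1},\ \exists w<z,\ \theta(e_{wz})=e_{u_{i+1}u_i}\}|$, $0\le i\le m-1$. $\theta$ is admissible if $s^+_{\theta,\Gamma}(z)-s^-_{\theta,\Gamma}(z)=t^+_{\theta,\Gamma}(z)-t^-_{\theta,\Gamma}(z)$ for all closed walks $\Gamma$ and all $z$; $\mathcal{AM}(X)$ is the set of admissible elements of $\mathcal{M}(X)$. A bijection $\theta:B\to B$ is proper if there is an automorphism $\lambda$ of $X$ with $\theta(e_{xy})=e_{\lambda(x)\lambda(y)}$ for all $x<y$, or an anti-automorphism $\lambda$ of $X$ with $\theta(e_{xy})=e_{\lambda(y)\lambda(x)}$ for all $x<y$; $\mathcal{P}(X)$ is the set of proper bijections. *)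

theory Defs
  imports Main
begin

text \<open>A finite poset is modelled as a carrier set X of some ordered type,
with the induced order. The basis element e_xy (x<y) is the pair (x,y).\<close>

definition po_chain :: "'a::order set \<Rightarrow> 'a set \<Rightarrow> bool" where
  "po_chain X C \<longleftrightarrow> C \<subseteq> X \<and> (\<forall>x\<in>C. \<forall>y\<in>C. x \<le> y \<or> y \<le> x)"

definition po_length :: "'a::order set \<Rightarrow> nat" where
  "po_length X = Max {card C - 1 | C. po_chain X C}"

definition po_connected :: "'a::order set \<Rightarrow> bool" where
  "po_connected X \<longleftrightarrow> X \<noteq> {} \<and>
     (\<forall>x\<in>X. \<forall>y\<in>X. (x, y) \<in> ({(a, b). a \<in> X \<and> b \<in> X \<and> (a < b \<or> b < a)})\<^sup>*)"

definition po_Min :: "'a::order set \<Rightarrow> 'a set" where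
  "po_Min X = {x \<in> X. \<not> (\<exists>y\<in>X. y < x)}"

definition po_Max :: "'a::order set \<Rightarrow> 'a set" where
  "po_Max X = {x \<in> X. \<not> (\<exists>y\<in>X. x < y)}"

definition contains_weak_crown :: "'a::order set \<Rightarrow> bool" where
  "contains_weak_crown X \<longleftrightarrow> (\<exists>n::nat. \<exists>x y :: nat \<Rightarrow> 'a. n \<ge> 2 \<and>
     x ` {1..n} \<subseteq> X \<and> y ` {1..n} \<subseteq> X \<and>
     inj_on x {1..n} \<and> inj_on y {1..n} \<and> x ` {1..n} \<inter> y ` {1..n} = {} \<and>
     (\<forall>i\<in>{1..n}. x i < y i) \<and>
     (\<forall>i\<in>{1..n-1}. x (i + 1) < y i) \<and>
     x 1 < y n)"

definition po_B :: "'a::order set \<Rightarrow> ('a \<times> 'a) set" where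
  "po_B X = {(x, y). x \<in> X \<and> y \<in> X \<and> x < y}"

definition maximal_chains :: "'a::order set \<Rightarrow> 'a set set" where
  "maximal_chains X = {C. po_chain X C \<and> (\<forall>D. po_chain X D \<and> C \<subseteq> D \<longrightarrow> D = C)}"

text \<open>For C: u_1<...<u_m and D: v_1<...<v_m, the map u_i |-> v_i is the unique
order isomorphism f : C -> D, and u_i |-> v_(m-i+1) the unique order-reversing bijection.\<close>
definition increasing_on :: "'a::order set \<Rightarrow> ('a \<times> 'a \<Rightarrow> 'a \<times> 'a) \<Rightarrow> 'a set \<Rightarrow> bool" where
  "increasing_on X \<theta> C \<longleftrightarrow> (\<exists>D\<in>maximal_chains X. \<exists>f. bij_betw f C D \<and>
     (\<forall>u\<in>C. \<forall>v\<in>C. u < v \<longrightarrow> f u < f v) \<and>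
     (\<forall>u\<in>C. \<forall>v\<in>C. u < v \<longrightarrow> \<theta> (u, v) = (f u, f v)))"

definition decreasing_on :: "'a::order set \<Rightarrow> ('a \<times> 'a \<Rightarrow> 'a \<times> 'a) \<Rightarrow> 'a set \<Rightarrow> bool" where
  "decreasing_on X \<theta> C \<longleftrightarrow> (\<exists>D\<in>maximal_chains X. \<exists>g. bij_betw g C D \<and>
     (\<forall>u\<in>C. \<forall>v\<in>C. u < v \<longrightarrow> g v < g u) \<and>
     (\<forall>u\<in>C. \<forall>v\<in>C. u < v \<longrightarrow> \<theta> (u, v) = (g v, g u)))"

definition setM :: "'a::order set \<Rightarrow> ('a \<times> 'a \<Rightarrow> 'a \<times> 'a) set" where
  "setM X = {\<theta>. bij_betw \<theta> (po_B X) (po_B X) \<and>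
     (\<forall>C\<in>maximal_chains X. increasing_on X \<theta> C \<or> decreasing_on X \<theta> C)}"

definition po_covers :: "'a::order set \<Rightarrow> 'a \<Rightarrow> 'a \<Rightarrow> bool" where
  "po_covers X u v \<longleftrightarrow> u \<in> X \<and> v \<in> X \<and> v < u \<and> \<not> (\<exists>w\<in>X. v < w \<and> w < u)"

definition closed_walk :: "'a::order set \<Rightarrow> (nat \<Rightarrow> 'a) \<Rightarrow> nat \<Rightarrow> bool" where
  "closed_walk X u m \<longleftrightarrow> (\<forall>i\<le>m. u i \<in> X) \<and>
     (\<forall>i<m. po_covers X (u i) (u (Suc i)) \<or> po_covers X (u (Suc i)) (u i)) \<and> u 0 = u m"

definition s_plus where
  "s_plus X \<theta> u m z = card {i. i < m \<and> u i < u (Suc i) \<and>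
     (\<exists>w\<in>X. z < w \<and> \<theta> (z, w) = (u i, u (Suc i)))}"

definition s_minus where
  "s_minus X \<theta> u m z = card {i. i < m \<and> u (Suc i) < u i \<and>
     (\<exists>w\<in>X. z < w \<and> \<theta> (z, w) = (u (Suc i), u i))}"

definition t_plus where
  "t_plus X \<theta> u m z = card {i. i < m \<and> u i < u (Suc i) \<and>
     (\<exists>w\<in>X. w < z \<and> \<theta> (w, z) = (u i, u (Suc i)))}"

definition t_minus where
  "t_minus X \<theta> u m z = card {i. i < m \<and> u (Suc i) < u i \<and>
     (\<exists>w\<in>X. w < z \<and> \<theta> (w, z) = (u (Suc i), u i))}"

definition admissible :: "'a::order set \<Rightarrow> ('a \<times> 'a \<Rightarrow> 'a \<times> 'a) \<Rightarrow> bool" where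
  "admissible X \<theta> \<longleftrightarrow> (\<forall>u m. closed_walk X u m \<longrightarrow> (\<forall>z\<in>X.
     int (s_plus X \<theta> u m z) - int (s_minus X \<theta> u m z) =
     int (t_plus X \<theta> u m z) - int (t_minus X \<theta> u m z)))"

definition setAM :: "'a::order set \<Rightarrow> ('a \<times> 'a \<Rightarrow> 'a \<times> 'a) set" where
  "setAM X = {\<theta> \<in> setM X. admissible X \<theta>}"

definition setP :: "'a::order set \<Rightarrow> ('a \<times> 'a \<Rightarrow> 'a \<times> 'a) set" where
  "setP X = {\<theta>. bij_betw \<theta> (po_B X) (po_B X) \<and>
     ((\<exists>lam. bij_betw lam X X \<and> (\<forall>x\<in>X. \<forall>y\<in>X. x \<le> y \<longleftrightarrow> lam x \<le> lam y) \<and>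
          (\<forall>x\<in>X. \<forall>y\<in>X. x < y \<longrightarrow> \<theta> (x, y) = (lam x, lam y))) \<or>
      (\<exists>lam. bij_betw lam X X \<and> (\<forall>x\<in>X. \<forall>y\<in>X. x \<le> y \<longleftrightarrow> lam y \<le> lam x) \<and>
          (\<forall>x\<in>X. \<forall>y\<in>X. x < y \<longrightarrow> \<theta> (x, y) = (lam y, lam x))))}"

end

theory Submission
  imports Defs
begin


locale tposet =
  fixes X :: "'a::order set"
  assumes fin: "finite X" and conn: "po_connected X" and len: "po_length X = 1"
    and nc: "\<not> contains_weak_crown X"
begin

abbreviation "adj \<equiv> {(a, b). a \<in> X \<and> b \<in> X \<and> (a < b \<or> b < a)}"

lemma chainset_fin: "finite {card C - 1 | C. po_chain X C}"
proof -
  have "{card C - 1 | C. po_chain X C} \<subseteq> {..card X}"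
    using fin by (auto simp: po_chain_def intro: card_mono le_trans[OF diff_le_self])
  then show ?thesis using finite_subset by blast
qed

lemma no3: assumes "a \<in> X" "b \<in> X" "c \<in> X" "a < b" "b < c" shows False
proof -
  have ch: "po_chain X {a,b,c}" using assms unfolding po_chain_def by auto
  have "a \<noteq> b" "b \<noteq> c" "a \<noteq> c" using assms by (auto dest: less_trans)
  then have "card {a,b,c} = 3" by simp
  then have two: "2 \<in> {card C - 1 | C. po_chain X C}" using ch by force
  have "2 \<le> po_length X" unfolding po_length_def by (rule Max_ge[OF chainset_fin two])
  then show False using len by simp
qed

lemma edge_ex: "\<exists>a\<in>X. \<exists>b\<in>X. a < b"
proof -
  have "po_chain X {}" by (simp add: po_chain_def)
  then have ne: "{card C - 1 | C. po_chain X C} \<noteq> {}" by blast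
  have "po_length X \<in> {card C - 1 | C. po_chain X C}"
    unfolding po_length_def using chainset_fin ne by (rule Max_in)
  then obtain C where C: "po_chain X C" "card C - 1 = 1" using len by auto
  then have "card C = 2" by simp
  then obtain x y where "C = {x,y}" "x \<noteq> y" by (auto simp: card_2_iff)
  then show ?thesis using C(1) unfolding po_chain_def by (auto simp: order.order_iff_strict)
qed

lemma conn': "x \<in> X \<Longrightarrow> y \<in> X \<Longrightarrow> (x, y) \<in> adj\<^sup>*"
  using conn unfolding po_connected_def by (simp only:)

lemma closure:
  assumes "a \<in> S" "a \<in> X" "\<And>p q. p \<in> S \<Longrightarrow> q \<in> X \<Longrightarrow> p < q \<or> q < p \<Longrightarrow> q \<in> S"
  shows "X \<subseteq> S"
proof
  fix x assume x: "x \<in> X"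
  have "(a, x) \<in> adj\<^sup>*" using conn' assms(2) x by blast
  then show "x \<in> S"
    by (induction rule: rtrancl_induct) (use assms in auto)
qed

lemma below_min: assumes x: "x \<in> X" shows "\<exists>m\<in>po_Min X. m \<le> x"
proof (cases "x \<in> po_Min X")
  case True then show ?thesis by blast
next
  case False
  then obtain y where y: "y \<in> X" "y < x" using x unfolding po_Min_def by blast
  have "y \<in> po_Min X" unfolding po_Min_def using y x no3 by blast
  then show ?thesis using y by (blast intro: less_imp_le)
qed

lemma above_max: assumes x: "x \<in> X" shows "\<exists>m\<in>po_Max X. x \<le> m"
proof (cases "x \<in> po_Max X")
  case True then show ?thesis by blast
next
  case False
  then obtain y where y: "y \<in> X" "x < y" using x unfolding po_Max_def by blast
  have "y \<in> po_Max X" unfolding po_Max_def using y x no3 by blast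
  then show ?thesis using y by (blast intro: less_imp_le)
qed

lemma neighbor: assumes "x \<in> X" shows "\<exists>y\<in>X. x < y \<or> y < x"
proof -
  obtain a b where ab: "a \<in> X" "b \<in> X" "a < b" using edge_ex by blast
  obtain t where t: "t \<in> X" "t \<noteq> x" using ab by (metis order.strict_iff_not)
  have "(x, t) \<in> adj\<^sup>*" using conn' assms t by blast
  then show ?thesis using t(2)
    by (induction rule: converse_rtrancl_induct) auto
qed

lemma maxchain: assumes "C \<in> maximal_chains X" shows "\<exists>u v. C = {u,v} \<and> u < v"
proof -
  have ch: "po_chain X C" and mx: "\<And>D. po_chain X D \<Longrightarrow> C \<subseteq> D \<Longrightarrow> D = C"
    using assms unfolding maximal_chains_def by auto
  show ?thesis
  proof (cases "\<exists>u\<in>C. \<exists>v\<in>C. u < v")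
    case True
    then obtain u v where uv: "u \<in> C" "v \<in> C" "u < v" by blast
    have "C \<subseteq> {u,v}"
    proof
      fix w assume w: "w \<in> C"
      have X: "u \<in> X" "v \<in> X" "w \<in> X" using ch uv w unfolding po_chain_def by auto
      have "w \<le> u \<or> u \<le> w" "w \<le> v \<or> v \<le> w" using ch uv w unfolding po_chain_def by auto
      then show "w \<in> {u,v}" using no3[of w u v] no3[of u w v] no3[of u v w] X uv
        by (auto simp: order.order_iff_strict)
    qed
    then show ?thesis using uv by blast
  next
    case False
    have "C \<noteq> {}"
    proof
      assume "C = {}"
      obtain a where "a \<in> X" using edge_ex by blast
      then have "po_chain X {a}" by (simp add: po_chain_def)
      then show False using mx \<open>C = {}\<close> by blast
    qed
    then obtain x where x: "x \<in> C" by blast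
    have Cx: "C = {x}" using False ch x unfolding po_chain_def by (auto simp: order.order_iff_strict)
    have xX: "x \<in> X" using ch x unfolding po_chain_def by auto
    obtain y where y: "y \<in> X" "x < y \<or> y < x" using neighbor[OF xX] by blast
    have "po_chain X {x,y}" using y xX unfolding po_chain_def by auto
    then have "{x,y} = C" using mx Cx by blast
    then show ?thesis using y Cx by auto
  qed
qed

lemma chain2_max: assumes "a \<in> X" "b \<in> X" "a < b" shows "{a,b} \<in> maximal_chains X"
proof -
  have "po_chain X {a,b}" using assms unfolding po_chain_def by auto
  moreover have "D = {a,b}" if "po_chain X D" "{a,b} \<subseteq> D" for D
  proof
    show "D \<subseteq> {a,b}"
    proof
      fix c assume c: "c \<in> D"
      have "c \<in> X" "c \<le> a \<or> a \<le> c" "c \<le> b \<or> b \<le> c" using that c unfolding po_chain_def by auto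
      then show "c \<in> {a,b}" using no3[of c a b] no3[of a c b] no3[of a b c] assms
        by (auto simp: order.order_iff_strict)
    qed
  qed (use that in auto)
  ultimately show ?thesis unfolding maximal_chains_def by blast
qed

lemma allM: assumes bij: "bij_betw \<theta> (po_B X) (po_B X)" shows "\<theta> \<in> setM X"
proof -
  have "increasing_on X \<theta> C" if C: "C \<in> maximal_chains X" for C
  proof -
    obtain u v where uv: "C = {u,v}" "u < v" using maxchain[OF C] by blast
    have "po_chain X C" using C unfolding maximal_chains_def by simp
    then have "C \<subseteq> X" unfolding po_chain_def by (rule conjunct1)
    then have "u \<in> X" "v \<in> X" using uv by auto
    then have "(u,v) \<in> po_B X" using uv(2) unfolding po_B_def by blast
    then have "\<theta> (u,v) \<in> po_B X" by (rule bij_betw_apply[OF bij])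
    then obtain a' b' where ab: "\<theta> (u,v) = (a',b')" "a' \<in> X" "b' \<in> X" "a' < b'"
      unfolding po_B_def by blast
    define f where "f = (\<lambda>t. if t = u then a' else b')"
    have neq: "u \<noteq> v" "a' \<noteq> b'" using uv ab by auto
    have "inj_on f C" unfolding inj_on_def f_def uv using neq by auto
    moreover have "f ` C = {a',b'}" unfolding f_def uv using neq by auto
    ultimately have bf: "bij_betw f C {a',b'}" unfolding bij_betw_def by blast
    have o: "\<forall>s\<in>C. \<forall>t\<in>C. s < t \<longrightarrow> s = u \<and> t = v" using uv by auto
    have "\<forall>s\<in>C. \<forall>t\<in>C. s < t \<longrightarrow> f s < f t" using o ab neq unfolding f_def by auto
    moreover have "\<forall>s\<in>C. \<forall>t\<in>C. s < t \<longrightarrow> \<theta> (s,t) = (f s, f t)"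
      using o ab neq unfolding f_def by auto
    ultimately show "increasing_on X \<theta> C" unfolding increasing_on_def
      using chain2_max[OF ab(2-4)] bf by blast
  qed
  then show ?thesis unfolding setM_def using bij by simp
qed

end


lemma card_Suc_split: "card {i. i < Suc m \<and> Q i} = card {i. i < m \<and> Q i} + (if Q m then 1 else 0)"
proof -
  have "{i. i < Suc m \<and> Q i} = (if Q m then insert m {i. i < m \<and> Q i} else {i. i < m \<and> Q i})"
    by (auto simp: less_Suc_eq)
  then show ?thesis by simp
qed

lemma bool_count_int:
  "int (card {i. i < m \<and> P i \<and> \<not> P (Suc i)}) - int (card {i. i < m \<and> \<not> P i \<and> P (Suc i)})
   = of_bool (P 0) - of_bool (P m)"
proof (induction m)
  case 0 then show ?case by simp
next
  case (Suc m)
  show ?case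
    unfolding card_Suc_split[where Q = "\<lambda>i. P i \<and> \<not> P (Suc i)"]
      card_Suc_split[where Q = "\<lambda>i. \<not> P i \<and> P (Suc i)"]
    using Suc.IH by (cases "P m"; cases "P (Suc m)") auto
qed

lemma bool_count: "P 0 = P m \<Longrightarrow>
  card {i. i < m \<and> P i \<and> \<not> P (Suc i)} = card {i. i < m \<and> \<not> P i \<and> P (Suc i)}"
  using bool_count_int[of m P] by simp

context tposet
begin

lemma walk_step: assumes "closed_walk X u m" "i < m"
  shows "u i \<in> X \<and> u (Suc i) \<in> X \<and> (u i < u (Suc i) \<or> u (Suc i) < u i)"
  using assms unfolding closed_walk_def po_covers_def by auto

lemma crown_from_path:
  assumes p0: "p 0 = a0" and pk: "p k = b0" and ab: "a0 < b0"
    and steps: "\<forall>i<k. (p i, p (Suc i)) \<in> adj" and inj: "inj_on p {..k}" and k2: "k \<ge> 2"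
  shows False
proof -
  have inX: "p i \<in> X" if "i \<le> k" for i
  proof (cases i)
    case 0 then show ?thesis using steps k2 p0 by fastforce
  next
    case (Suc j) then show ?thesis using steps that by fastforce
  qed
  have a0X: "a0 \<in> X" using inX[of 0] p0 by simp
  have b0X: "b0 \<in> X" using inX[of k] pk by simp
  have alt: "(even i \<longrightarrow> p i < p (Suc i)) \<and> (odd i \<longrightarrow> p (Suc i) < p i)" if "i < k" for i
    using that
  proof (induction i)
    case 0
    have "p 0 < p 1 \<or> p 1 < p 0" "p 1 \<in> X" using steps 0 by auto
    then show ?case using no3[of "p 1" a0 b0] p0 ab a0X b0X by auto
  next
    case (Suc i)
    have st: "p (Suc i) < p (Suc (Suc i)) \<or> p (Suc (Suc i)) < p (Suc i)" using steps Suc.prems by auto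
    have X3: "p i \<in> X" "p (Suc i) \<in> X" "p (Suc (Suc i)) \<in> X" using inX Suc.prems by auto
    from Suc.IH Suc.prems have ih: "(even i \<longrightarrow> p i < p (Suc i)) \<and> (odd i \<longrightarrow> p (Suc i) < p i)" by simp
    show ?case
    proof (cases "even i")
      case True
      then show ?thesis using ih st no3[of "p i" "p (Suc i)" "p (Suc (Suc i))"] X3 by auto
    next
      case False
      then show ?thesis using ih st no3[of "p (Suc (Suc i))" "p (Suc i)" "p i"] X3 by auto
    qed
  qed
  have kodd: "odd k"
  proof
    assume "even k"
    then have "odd (k - 1)" using k2 by simp
    then have "p k < p (k - 1)" using alt[of "k - 1"] k2 by simp
    then show False using no3[of a0 b0 "p (k - 1)"] pk ab a0X b0X inX[of "k - 1"] by auto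
  qed
  define n where "n = (k + 1) div 2"
  have kn: "k = 2 * n - 1" "n \<ge> 2" using kodd k2 unfolding n_def by presburger+
  define x where "x = (\<lambda>i. p (2 * i - 2))"
  define y where "y = (\<lambda>i. p (2 * i - 1))"
  have "contains_weak_crown X"
    unfolding contains_weak_crown_def
  proof (intro exI conjI)
    show "2 \<le> n" by (rule kn(2))
    show "x ` {1..n} \<subseteq> X" unfolding x_def using inX kn by auto
    show "y ` {1..n} \<subseteq> X" unfolding y_def using inX kn by auto
    show "inj_on x {1..n}" unfolding x_def inj_on_def
    proof (intro ballI impI)
      fix i j assume "i \<in> {1..n}" "j \<in> {1..n}" "p (2 * i - 2) = p (2 * j - 2)"
      then have "2 * i - 2 = 2 * j - 2" using inj kn unfolding inj_on_def by auto
      then show "i = j" using \<open>i \<in> {1..n}\<close> \<open>j \<in> {1..n}\<close> by auto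
    qed
    show "inj_on y {1..n}" unfolding y_def inj_on_def
    proof (intro ballI impI)
      fix i j assume "i \<in> {1..n}" "j \<in> {1..n}" "p (2 * i - 1) = p (2 * j - 1)"
      then have "2 * i - 1 = 2 * j - 1" using inj kn unfolding inj_on_def by auto
      then show "i = j" using \<open>i \<in> {1..n}\<close> \<open>j \<in> {1..n}\<close> by auto
    qed
    show "x ` {1..n} \<inter> y ` {1..n} = {}"
    proof (rule ccontr)
      assume "x ` {1..n} \<inter> y ` {1..n} \<noteq> {}"
      then obtain z where "z \<in> x ` {1..n}" "z \<in> y ` {1..n}" by blast
      then obtain i j where ij: "i \<in> {1..n}" "j \<in> {1..n}" "p (2 * i - 2) = p (2 * j - 1)"
        unfolding x_def y_def by (auto simp del: One_nat_def)
      then have "2 * i - 2 = 2 * j - 1" using inj kn unfolding inj_on_def by auto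
      moreover have "i \<ge> 1" "j \<ge> 1" using ij by auto
      ultimately show False by presburger
    qed
    show "\<forall>i\<in>{1..n}. x i < y i"
    proof
      fix i assume i: "i \<in> {1..n}"
      have "p (2 * i - 2) < p (Suc (2 * i - 2))" using alt[of "2 * i - 2"] i kn by auto
      moreover have "Suc (2 * i - 2) = 2 * i - 1" using i by auto
      ultimately show "x i < y i" unfolding x_def y_def by simp
    qed
    show "\<forall>i\<in>{1..n - 1}. x (i + 1) < y i"
    proof
      fix i assume i: "i \<in> {1..n - 1}"
      have "p (Suc (2 * i - 1)) < p (2 * i - 1)" using alt[of "2 * i - 1"] i kn by auto
      moreover have "Suc (2 * i - 1) = 2 * (i + 1) - 2" using i by auto
      ultimately show "x (i + 1) < y i" unfolding x_def y_def by simp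
    qed
    show "x 1 < y n" unfolding x_def y_def using p0 pk ab kn by simp
  qed
  then show False using nc by simp
qed

lemma no_bypass:
  assumes ab: "a0 < b0" "a0 \<in> X" "b0 \<in> X"
    and r: "(a0, b0) \<in> {(p, q). (p, q) \<in> adj \<and> {p, q} \<noteq> {a0, b0}}\<^sup>*"
  shows False
proof -
  define R where "R = {(p, q). (p, q) \<in> adj \<and> {p, q} \<noteq> {a0, b0}}"
  define Q where "Q = (\<lambda>k. \<exists>p. p 0 = a0 \<and> p k = b0 \<and> (\<forall>i<k. (p i, p (Suc i)) \<in> R))"
  have "\<exists>k. Q k" using r unfolding Q_def R_def rtrancl_power relpow_fun_conv by blast
  then obtain k where Qk: "Q k" and kmin: "\<And>k'. k' < k \<Longrightarrow> \<not> Q k'"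
    using exists_least_iff[of Q] by blast
  then obtain p where p: "p 0 = a0" "p k = b0" "\<forall>i<k. (p i, p (Suc i)) \<in> R"
    unfolding Q_def by blast
  have inj: "inj_on p {..k}"
  proof (rule ccontr)
    assume "\<not> inj_on p {..k}"
    then obtain i j where ij: "i < j" "j \<le> k" "p i = p j"
      unfolding inj_on_def by (metis atMost_iff linorder_neqE_nat)
    define d where "d = j - i"
    define q where "q = (\<lambda>t. if t \<le> i then p t else p (t + d))"
    have qge: "q t = p (t + d)" if "t \<ge> i" for t
      using that ij unfolding q_def d_def by auto
    have "Q (k - d)" unfolding Q_def
    proof (intro exI conjI allI impI)
      show "q 0 = a0" using p unfolding q_def by simp
      show "q (k - d) = b0" using qge[of "k - d"] p ij unfolding d_def by simp
      fix t assume t: "t < k - d"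
      show "(q t, q (Suc t)) \<in> R"
      proof (cases "t < i")
        case True
        then show ?thesis using p(3) ij unfolding q_def by auto
      next
        case False
        then have "q t = p (t + d)" "q (Suc t) = p (Suc (t + d))" using qge by auto
        moreover have "t + d < k" using t ij unfolding d_def by auto
        ultimately show ?thesis using p(3) by simp
      qed
    qed
    moreover have "k - d < k" using ij unfolding d_def by auto
    ultimately show False using kmin by blast
  qed
  have "k \<noteq> 0"
  proof
    assume "k = 0" then show False using p(1,2) ab(1) by simp
  qed
  moreover have "k \<noteq> 1" using p(3) p(1,2) unfolding R_def by auto
  ultimately have "k \<ge> 2" by simp
  moreover have "\<forall>i<k. (p i, p (Suc i)) \<in> adj" using p(3) unfolding R_def by auto
  ultimately show False using crown_from_path[OF p(1,2) ab(1) _ inj] by blast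
qed

lemma edge_balance:
  assumes w: "closed_walk X u m" and ab: "a0 < b0" "a0 \<in> X" "b0 \<in> X"
  shows "card {i. i < m \<and> u i = a0 \<and> u (Suc i) = b0} = card {i. i < m \<and> u i = b0 \<and> u (Suc i) = a0}"
proof -
  define R where "R = {(p, q). (p, q) \<in> adj \<and> {p, q} \<noteq> {a0, b0}}"
  define A where "A = {x. (a0, x) \<in> R\<^sup>*}"
  have bA: "b0 \<notin> A" using no_bypass[OF ab] unfolding A_def R_def by blast
  have aA: "a0 \<in> A" unfolding A_def by simp
  have ab_ne: "a0 \<noteq> b0" using ab by simp
  have stepA: "q \<in> A" if "p \<in> A" "(p, q) \<in> R" for p q
    using that unfolding A_def by (simp add: rtrancl.rtrancl_into_rtrancl)
  have inR: "(p, q) \<in> R" if "(p, q) \<in> adj" "{p, q} \<noteq> {a0, b0}" for p q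
    using that unfolding R_def by simp
  have out: "(u i \<in> A \<and> u (Suc i) \<notin> A) \<longleftrightarrow> (u i = a0 \<and> u (Suc i) = b0)" if i: "i < m" for i
  proof
    assume h: "u i \<in> A \<and> u (Suc i) \<notin> A"
    have st: "(u i, u (Suc i)) \<in> adj" using walk_step[OF w i] by simp
    have "{u i, u (Suc i)} = {a0, b0}"
    proof (rule ccontr)
      assume "{u i, u (Suc i)} \<noteq> {a0, b0}"
      then have "u (Suc i) \<in> A" using stepA[OF _ inR[OF st]] h by blast
      then show False using h by simp
    qed
    then have "(u i = a0 \<and> u (Suc i) = b0) \<or> (u i = b0 \<and> u (Suc i) = a0)"
      by (simp add: doubleton_eq_iff)
    then show "u i = a0 \<and> u (Suc i) = b0" using h bA by blast
  next
    assume "u i = a0 \<and> u (Suc i) = b0"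
    then show "u i \<in> A \<and> u (Suc i) \<notin> A" using aA bA by simp
  qed
  have inn: "(u i \<notin> A \<and> u (Suc i) \<in> A) \<longleftrightarrow> (u i = b0 \<and> u (Suc i) = a0)" if i: "i < m" for i
  proof
    assume h: "u i \<notin> A \<and> u (Suc i) \<in> A"
    have st: "(u (Suc i), u i) \<in> adj" using walk_step[OF w i] by auto
    have "{u i, u (Suc i)} = {a0, b0}"
    proof (rule ccontr)
      assume "{u i, u (Suc i)} \<noteq> {a0, b0}"
      then have "{u (Suc i), u i} \<noteq> {a0, b0}" by (simp add: insert_commute)
      then have "u i \<in> A" using stepA[OF _ inR[OF st]] h by blast
      then show False using h by simp
    qed
    then have "(u i = a0 \<and> u (Suc i) = b0) \<or> (u i = b0 \<and> u (Suc i) = a0)"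
      by (simp add: doubleton_eq_iff)
    then show "u i = b0 \<and> u (Suc i) = a0" using h aA by blast
  next
    assume "u i = b0 \<and> u (Suc i) = a0"
    then show "u i \<notin> A \<and> u (Suc i) \<in> A" using aA bA by simp
  qed
  have e1: "{i. i < m \<and> u i \<in> A \<and> u (Suc i) \<notin> A} = {i. i < m \<and> u i = a0 \<and> u (Suc i) = b0}"
    using out by blast
  have e2: "{i. i < m \<and> u i \<notin> A \<and> u (Suc i) \<in> A} = {i. i < m \<and> u i = b0 \<and> u (Suc i) = a0}"
    using inn by blast
  have "u 0 = u m" using w unfolding closed_walk_def by simp
  then have "card {i. i < m \<and> u i \<in> A \<and> u (Suc i) \<notin> A} = card {i. i < m \<and> u i \<notin> A \<and> u (Suc i) \<in> A}"
    using bool_count[of "\<lambda>i. u i \<in> A" m] by simp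
  then show ?thesis unfolding e1 e2 .
qed

end


context tposet
begin

lemma finB: "finite (po_B X)"
proof -
  have "po_B X \<subseteq> X \<times> X" unfolding po_B_def by blast
  then show ?thesis using fin finite_subset by blast
qed

lemma count_sum:
  fixes m :: nat
  assumes "finite S"
  shows "card {i. i < m \<and> f i \<in> S} = (\<Sum>e\<in>S. card {i. i < m \<and> f i = e})"
proof -
  have eq: "{i. i < m \<and> f i \<in> S} = (\<Union>e\<in>S. {i. i < m \<and> f i = e})" by blast
  show ?thesis unfolding eq
  proof (rule card_UN_disjoint)
    show "\<forall>e\<in>S. finite {i. i < m \<and> f i = e}"
      by (intro ballI, rule finite_subset[of _ "{..<m}"]) auto
  qed (use assms in auto)
qed

lemma balance_set:
  assumes w: "closed_walk X u m" and E: "E \<subseteq> po_B X"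
  shows "card {i. i < m \<and> (u i, u (Suc i)) \<in> E} = card {i. i < m \<and> (u (Suc i), u i) \<in> E}"
proof -
  have fE: "finite E" using E finB finite_subset by blast
  have "card {i. i < m \<and> (u i, u (Suc i)) \<in> E} = (\<Sum>e\<in>E. card {i. i < m \<and> (u i, u (Suc i)) = e})"
    by (rule count_sum[OF fE])
  also have "\<dots> = (\<Sum>e\<in>E. card {i. i < m \<and> (u (Suc i), u i) = e})"
  proof (rule sum.cong[OF refl])
    fix e assume "e \<in> E"
    then obtain a b where e: "e = (a, b)" "a \<in> X" "b \<in> X" "a < b" using E unfolding po_B_def by blast
    have "card {i. i < m \<and> (u i, u (Suc i)) = e} = card {i. i < m \<and> u i = a \<and> u (Suc i) = b}"
      unfolding e by simp
    also have "\<dots> = card {i. i < m \<and> u i = b \<and> u (Suc i) = a}"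
      by (rule edge_balance[OF w e(4,2,3)])
    also have "\<dots> = card {i. i < m \<and> (u (Suc i), u i) = e}"
      unfolding e by (rule arg_cong[where f = card]) blast
    finally show "card {i. i < m \<and> (u i, u (Suc i)) = e} = card {i. i < m \<and> (u (Suc i), u i) = e}" .
  qed
  also have "\<dots> = card {i. i < m \<and> (u (Suc i), u i) \<in> E}"
    by (rule count_sum[OF fE, symmetric])
  finally show ?thesis .
qed

lemma adm_all:
  assumes img: "\<theta> ` po_B X \<subseteq> po_B X"
  shows "admissible X \<theta>"
  unfolding admissible_def
proof (intro allI impI ballI)
  fix u m z assume w: "closed_walk X u m" and z: "z \<in> X"
  define S where "S = \<theta> ` {e \<in> po_B X. fst e = z}"
  define T where "T = \<theta> ` {e \<in> po_B X. snd e = z}"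
  have SB: "S \<subseteq> po_B X" "T \<subseteq> po_B X" unfolding S_def T_def using img by auto
  have s1: "s_plus X \<theta> u m z = card {i. i < m \<and> (u i, u (Suc i)) \<in> S}"
    unfolding s_plus_def
  proof (rule arg_cong[where f = card], intro set_eqI iffI)
    fix i assume "i \<in> {i. i < m \<and> u i < u (Suc i) \<and> (\<exists>w\<in>X. z < w \<and> \<theta> (z, w) = (u i, u (Suc i)))}"
    then obtain w where "i < m" "w \<in> X" "z < w" "\<theta> (z, w) = (u i, u (Suc i))" by blast
    moreover have "(z, w) \<in> {e \<in> po_B X. fst e = z}" using z calculation unfolding po_B_def by simp
    then have "\<theta> (z, w) \<in> S" unfolding S_def by (rule imageI)
    ultimately show "i \<in> {i. i < m \<and> (u i, u (Suc i)) \<in> S}" by simp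
  next
    fix i assume "i \<in> {i. i < m \<and> (u i, u (Suc i)) \<in> S}"
    then obtain e where e: "i < m" "e \<in> po_B X" "fst e = z" "(u i, u (Suc i)) = \<theta> e" unfolding S_def by blast
    then obtain w where ew: "e = (z, w)" "w \<in> X" "z < w" unfolding po_B_def by auto
    have "(u i, u (Suc i)) \<in> po_B X" using e img by auto
    then have "u i < u (Suc i)" unfolding po_B_def by simp
    then show "i \<in> {i. i < m \<and> u i < u (Suc i) \<and> (\<exists>w\<in>X. z < w \<and> \<theta> (z, w) = (u i, u (Suc i)))}"
      using e ew by auto
  qed
  have s2: "s_minus X \<theta> u m z = card {i. i < m \<and> (u (Suc i), u i) \<in> S}"
    unfolding s_minus_def
  proof (rule arg_cong[where f = card], intro set_eqI iffI)
    fix i assume "i \<in> {i. i < m \<and> u (Suc i) < u i \<and> (\<exists>w\<in>X. z < w \<and> \<theta> (z, w) = (u (Suc i), u i))}"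
    then obtain w where "i < m" "w \<in> X" "z < w" "\<theta> (z, w) = (u (Suc i), u i)" by blast
    moreover have "(z, w) \<in> {e \<in> po_B X. fst e = z}" using z calculation unfolding po_B_def by simp
    then have "\<theta> (z, w) \<in> S" unfolding S_def by (rule imageI)
    ultimately show "i \<in> {i. i < m \<and> (u (Suc i), u i) \<in> S}" by simp
  next
    fix i assume "i \<in> {i. i < m \<and> (u (Suc i), u i) \<in> S}"
    then obtain e where e: "i < m" "e \<in> po_B X" "fst e = z" "(u (Suc i), u i) = \<theta> e" unfolding S_def by blast
    then obtain w where ew: "e = (z, w)" "w \<in> X" "z < w" unfolding po_B_def by auto
    have "(u (Suc i), u i) \<in> po_B X" using e img by auto
    then have "u (Suc i) < u i" unfolding po_B_def by simp
    then show "i \<in> {i. i < m \<and> u (Suc i) < u i \<and> (\<exists>w\<in>X. z < w \<and> \<theta> (z, w) = (u (Suc i), u i))}"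
      using e ew by auto
  qed
  have t1: "t_plus X \<theta> u m z = card {i. i < m \<and> (u i, u (Suc i)) \<in> T}"
    unfolding t_plus_def
  proof (rule arg_cong[where f = card], intro set_eqI iffI)
    fix i assume "i \<in> {i. i < m \<and> u i < u (Suc i) \<and> (\<exists>w\<in>X. w < z \<and> \<theta> (w, z) = (u i, u (Suc i)))}"
    then obtain w where "i < m" "w \<in> X" "w < z" "\<theta> (w, z) = (u i, u (Suc i))" by blast
    moreover have "(w, z) \<in> {e \<in> po_B X. snd e = z}" using z calculation unfolding po_B_def by simp
    then have "\<theta> (w, z) \<in> T" unfolding T_def by (rule imageI)
    ultimately show "i \<in> {i. i < m \<and> (u i, u (Suc i)) \<in> T}" by simp
  next
    fix i assume "i \<in> {i. i < m \<and> (u i, u (Suc i)) \<in> T}"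
    then obtain e where e: "i < m" "e \<in> po_B X" "snd e = z" "(u i, u (Suc i)) = \<theta> e" unfolding T_def by blast
    then obtain w where ew: "e = (w, z)" "w \<in> X" "w < z" unfolding po_B_def by auto
    have "(u i, u (Suc i)) \<in> po_B X" using e img by auto
    then have "u i < u (Suc i)" unfolding po_B_def by simp
    then show "i \<in> {i. i < m \<and> u i < u (Suc i) \<and> (\<exists>w\<in>X. w < z \<and> \<theta> (w, z) = (u i, u (Suc i)))}"
      using e ew by auto
  qed
  have t2: "t_minus X \<theta> u m z = card {i. i < m \<and> (u (Suc i), u i) \<in> T}"
    unfolding t_minus_def
  proof (rule arg_cong[where f = card], intro set_eqI iffI)
    fix i assume "i \<in> {i. i < m \<and> u (Suc i) < u i \<and> (\<exists>w\<in>X. w < z \<and> \<theta> (w, z) = (u (Suc i), u i))}"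
    then obtain w where "i < m" "w \<in> X" "w < z" "\<theta> (w, z) = (u (Suc i), u i)" by blast
    moreover have "(w, z) \<in> {e \<in> po_B X. snd e = z}" using z calculation unfolding po_B_def by simp
    then have "\<theta> (w, z) \<in> T" unfolding T_def by (rule imageI)
    ultimately show "i \<in> {i. i < m \<and> (u (Suc i), u i) \<in> T}" by simp
  next
    fix i assume "i \<in> {i. i < m \<and> (u (Suc i), u i) \<in> T}"
    then obtain e where e: "i < m" "e \<in> po_B X" "snd e = z" "(u (Suc i), u i) = \<theta> e" unfolding T_def by blast
    then obtain w where ew: "e = (w, z)" "w \<in> X" "w < z" unfolding po_B_def by auto
    have "(u (Suc i), u i) \<in> po_B X" using e img by auto
    then have "u (Suc i) < u i" unfolding po_B_def by simp
    then show "i \<in> {i. i < m \<and> u (Suc i) < u i \<and> (\<exists>w\<in>X. w < z \<and> \<theta> (w, z) = (u (Suc i), u i))}"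
      using e ew by auto
  qed
  show "int (s_plus X \<theta> u m z) - int (s_minus X \<theta> u m z) =
        int (t_plus X \<theta> u m z) - int (t_minus X \<theta> u m z)"
    unfolding s1 s2 t1 t2 using balance_set[OF w SB(1)] balance_set[OF w SB(2)] by simp
qed

lemma AM_eq: "setAM X = {\<theta>. bij_betw \<theta> (po_B X) (po_B X)}"
proof (intro set_eqI iffI)
  fix \<theta> assume "\<theta> \<in> setAM X"
  then show "\<theta> \<in> {\<theta>. bij_betw \<theta> (po_B X) (po_B X)}" unfolding setAM_def setM_def by simp
next
  fix \<theta> assume "\<theta> \<in> {\<theta>. bij_betw \<theta> (po_B X) (po_B X)}"
  then have b: "bij_betw \<theta> (po_B X) (po_B X)" by simp
  have "\<theta> ` po_B X \<subseteq> po_B X" using b unfolding bij_betw_def by simp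
  then show "\<theta> \<in> setAM X" unfolding setAM_def using allM[OF b] adm_all by simp
qed

end


context tposet
begin

lemma star_min:
  assumes Mn: "po_Min X = {m}" and b: "bij_betw \<theta> (po_B X) (po_B X)"
  shows "\<theta> \<in> setP X"
proof -
  have mX: "m \<in> X" using Mn unfolding po_Min_def by blast
  have ge: "m \<le> x" if "x \<in> X" for x using below_min[OF that] Mn by auto
  have gt: "m < x" if "x \<in> X" "x \<noteq> m" for x using ge[OF that(1)] that(2) by simp
  have low: "x = m" if "x \<in> X" "y \<in> X" "x < y" for x y
  proof (rule ccontr)
    assume "x \<noteq> m"
    then show False using no3[OF mX that(1,2) gt[OF that(1)]] that(3) by blast
  qed
  have inj\<theta>: "inj_on \<theta> (po_B X)" using b bij_betw_imp_inj_on by blast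
  have img: "\<theta> ` po_B X \<subseteq> po_B X" using b unfolding bij_betw_def by simp
  define lam where "lam = (\<lambda>x. if x = m then m else snd (\<theta> (m, x)))"
  have th: "\<theta> (m, y) = (m, lam y) \<and> lam y \<in> X \<and> m < lam y" if "y \<in> X" "y \<noteq> m" for y
  proof -
    have "(m, y) \<in> po_B X" using mX that gt unfolding po_B_def by simp
    then have "\<theta> (m, y) \<in> po_B X" using img by blast
    then obtain p q where pq: "\<theta> (m, y) = (p, q)" "p \<in> X" "q \<in> X" "p < q" unfolding po_B_def by blast
    have "p = m" using low[OF pq(2,3,4)] .
    then show ?thesis using pq that unfolding lam_def by simp
  qed
  have lamX: "lam ` X \<subseteq> X" unfolding lam_def using th mX by auto
  have injl: "inj_on lam X"
  proof (rule inj_onI)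
    fix x y assume xy: "x \<in> X" "y \<in> X" "lam x = lam y"
    show "x = y"
    proof (cases "x = m"; cases "y = m")
      assume "x = m" "y \<noteq> m"
      then show ?thesis using th[OF xy(2)] xy(3) unfolding lam_def by simp
    next
      assume "x \<noteq> m" "y = m"
      then show ?thesis using th[OF xy(1)] xy(3) unfolding lam_def by simp
    next
      assume h: "x \<noteq> m" "y \<noteq> m"
      have "(m, x) \<in> po_B X" "(m, y) \<in> po_B X" using mX xy h gt unfolding po_B_def by auto
      moreover have "\<theta> (m, x) = \<theta> (m, y)" using th[OF xy(1) h(1)] th[OF xy(2) h(2)] xy(3) by simp
      ultimately show ?thesis using inj\<theta> unfolding inj_on_def by blast
    qed simp
  qed
  have bl: "bij_betw lam X X" unfolding bij_betw_def using injl endo_inj_surj[OF fin lamX injl] by simp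
  have ord: "x \<le> y \<longleftrightarrow> lam x \<le> lam y" if "x \<in> X" "y \<in> X" for x y
  proof (cases "x = y")
    case True then show ?thesis by simp
  next
    case False
    have ne: "lam x \<noteq> lam y" using injl that False unfolding inj_on_def by blast
    show ?thesis
    proof (cases "x = m")
      case True
      then show ?thesis using ge[OF that(2)] th[OF that(2)] False unfolding lam_def by auto
    next
      case xm: False
      have lx: "m < lam x" "lam x \<in> X" using th[OF that(1) xm] by auto
      show ?thesis
      proof (cases "y = m")
        case True
        then show ?thesis using gt[OF that(1) xm] lx unfolding lam_def by auto
      next
        case ym: False
        have ly: "m < lam y" "lam y \<in> X" using th[OF that(2) ym] by auto
        have "\<not> x < y" using low[OF that] xm by blast
        moreover have "\<not> lam x < lam y" using low[OF lx(2) ly(2)] lx by auto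
        ultimately show ?thesis using False ne by auto
      qed
    qed
  qed
  have "\<theta> (x, y) = (lam x, lam y)" if "x \<in> X" "y \<in> X" "x < y" for x y
  proof -
    have "x = m" using low[OF that] .
    moreover have "y \<noteq> m" using that calculation by auto
    ultimately show ?thesis using th[OF that(2)] unfolding lam_def by simp
  qed
  then show ?thesis unfolding setP_def using b bl ord by blast
qed

lemma star_max:
  assumes Mx: "po_Max X = {m}" and b: "bij_betw \<theta> (po_B X) (po_B X)"
  shows "\<theta> \<in> setP X"
proof -
  have mX: "m \<in> X" using Mx unfolding po_Max_def by blast
  have ge: "x \<le> m" if "x \<in> X" for x using above_max[OF that] Mx by auto
  have gt: "x < m" if "x \<in> X" "x \<noteq> m" for x using ge[OF that(1)] that(2) by simp
  have high: "y = m" if "x \<in> X" "y \<in> X" "x < y" for x y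
  proof (rule ccontr)
    assume "y \<noteq> m"
    then show False using no3[OF that(1,2) mX that(3) gt[OF that(2)]] by blast
  qed
  have inj\<theta>: "inj_on \<theta> (po_B X)" using b bij_betw_imp_inj_on by blast
  have img: "\<theta> ` po_B X \<subseteq> po_B X" using b unfolding bij_betw_def by simp
  define lam where "lam = (\<lambda>x. if x = m then m else fst (\<theta> (x, m)))"
  have th: "\<theta> (y, m) = (lam y, m) \<and> lam y \<in> X \<and> lam y < m" if "y \<in> X" "y \<noteq> m" for y
  proof -
    have "(y, m) \<in> po_B X" using mX that gt unfolding po_B_def by simp
    then have "\<theta> (y, m) \<in> po_B X" using img by blast
    then obtain p q where pq: "\<theta> (y, m) = (p, q)" "p \<in> X" "q \<in> X" "p < q" unfolding po_B_def by blast
    have "q = m" using high[OF pq(2,3,4)] .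
    then show ?thesis using pq that unfolding lam_def by simp
  qed
  have lamX: "lam ` X \<subseteq> X" unfolding lam_def using th mX by auto
  have injl: "inj_on lam X"
  proof (rule inj_onI)
    fix x y assume xy: "x \<in> X" "y \<in> X" "lam x = lam y"
    show "x = y"
    proof (cases "x = m"; cases "y = m")
      assume "x = m" "y \<noteq> m"
      then show ?thesis using th[OF xy(2)] xy(3) unfolding lam_def by simp
    next
      assume "x \<noteq> m" "y = m"
      then show ?thesis using th[OF xy(1)] xy(3) unfolding lam_def by simp
    next
      assume h: "x \<noteq> m" "y \<noteq> m"
      have "(x, m) \<in> po_B X" "(y, m) \<in> po_B X" using mX xy h gt unfolding po_B_def by auto
      moreover have "\<theta> (x, m) = \<theta> (y, m)" using th[OF xy(1) h(1)] th[OF xy(2) h(2)] xy(3) by simp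
      ultimately show ?thesis using inj\<theta> unfolding inj_on_def by blast
    qed simp
  qed
  have bl: "bij_betw lam X X" unfolding bij_betw_def using injl endo_inj_surj[OF fin lamX injl] by simp
  have ord: "x \<le> y \<longleftrightarrow> lam x \<le> lam y" if "x \<in> X" "y \<in> X" for x y
  proof (cases "x = y")
    case True then show ?thesis by simp
  next
    case False
    have ne: "lam x \<noteq> lam y" using injl that False unfolding inj_on_def by blast
    show ?thesis
    proof (cases "y = m")
      case True
      then show ?thesis using ge[OF that(1)] th[OF that(1)] False unfolding lam_def by auto
    next
      case ym: False
      have ly: "lam y < m" "lam y \<in> X" using th[OF that(2) ym] by auto
      show ?thesis
      proof (cases "x = m")
        case True
        then show ?thesis using gt[OF that(2) ym] ly unfolding lam_def by auto
      next
        case xm: False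
        have lx: "lam x < m" "lam x \<in> X" using th[OF that(1) xm] by auto
        have "\<not> x < y" using high[OF that] ym by blast
        moreover have "\<not> lam x < lam y" using high[OF lx(2) ly(2)] ly by auto
        ultimately show ?thesis using False ne by auto
      qed
    qed
  qed
  have "\<theta> (x, y) = (lam x, lam y)" if "x \<in> X" "y \<in> X" "x < y" for x y
  proof -
    have "y = m" using high[OF that] .
    moreover have "x \<noteq> m" using that calculation by auto
    ultimately show ?thesis using th[OF that(1)] unfolding lam_def by simp
  qed
  then show ?thesis unfolding setP_def using b bl ord by blast
qed

definition P4 :: bool where
  "P4 \<longleftrightarrow> (\<exists>x1 y1 x2 y2. x1 \<in> X \<and> y1 \<in> X \<and> x2 \<in> X \<and> y2 \<in> X \<and>
     x1 < y1 \<and> x2 < y1 \<and> x2 < y2 \<and> x1 \<noteq> x2 \<and> y1 \<noteq> y2)"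

lemma P4_or_star: "P4 \<or> card (po_Min X) = 1 \<or> card (po_Max X) = 1"
proof (rule ccontr)
  assume H: "\<not> (P4 \<or> card (po_Min X) = 1 \<or> card (po_Max X) = 1)"
  then have nP: "\<not> P4" and n1: "card (po_Min X) \<noteq> 1" "card (po_Max X) \<noteq> 1" by auto
  obtain a b where ab: "a \<in> X" "b \<in> X" "a < b" using edge_ex by blast
  show False
  proof (cases "\<forall>c\<in>X. c < b \<longrightarrow> c = a")
    case caseA: True
    define S where "S = {a} \<union> {y \<in> X. a < y}"
    have "X \<subseteq> S"
    proof (rule closure[of a S])
      fix p q assume p: "p \<in> S" and q: "q \<in> X" and pq: "p < q \<or> q < p"
      show "q \<in> S"
      proof (cases "p = a")
        case True
        then show ?thesis using pq no3[OF q ab(1,2) _ ab(3)] q unfolding S_def by auto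
      next
        case False
        then have pX: "p \<in> X" "a < p" using p unfolding S_def by auto
        have "\<not> p < q" using no3[OF ab(1) pX(1) q pX(2)] by blast
        then have qp: "q < p" using pq by simp
        show ?thesis
        proof (cases "q = a")
          case True then show ?thesis unfolding S_def by simp
        next
          case qa: False
          show ?thesis
          proof (cases "p = b")
            case True then show ?thesis using caseA q qp qa by auto
          next
            case False
            then have P4 unfolding P4_def using q pX ab qp qa by blast
            then show ?thesis using nP by simp
          qed
        qed
      qed
    qed (use ab in \<open>auto simp: S_def\<close>)
    have "po_Min X = {a}"
    proof (intro set_eqI iffI)
      fix x assume "x \<in> po_Min X"
      then have "x \<in> X" "\<not> (\<exists>y\<in>X. y < x)" unfolding po_Min_def by auto
      then show "x \<in> {a}" using \<open>X \<subseteq> S\<close> ab(1) unfolding S_def by auto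
    next
      fix x assume "x \<in> {a}"
      then have "x = a" by simp
      moreover have "\<not> (\<exists>y\<in>X. y < a)"
      proof
        assume "\<exists>y\<in>X. y < a"
        then obtain y where y: "y \<in> X" "y < a" by blast
        then have "y \<in> S" using \<open>X \<subseteq> S\<close> by blast
        then show False using y unfolding S_def by auto
      qed
      ultimately show "x \<in> po_Min X" unfolding po_Min_def using ab by simp
    qed
    then show False using n1 by simp
  next
    case notA: False
    show False
    proof (cases "\<forall>c\<in>X. a < c \<longrightarrow> c = b")
      case caseB: True
      define S where "S = {b} \<union> {y \<in> X. y < b}"
      have "X \<subseteq> S"
      proof (rule closure[of b S])
        fix p q assume p: "p \<in> S" and q: "q \<in> X" and pq: "p < q \<or> q < p"
        show "q \<in> S"
        proof (cases "p = b")
          case True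
          then show ?thesis using pq no3[OF ab(1,2) q ab(3)] q unfolding S_def by auto
        next
          case False
          then have pX: "p \<in> X" "p < b" using p unfolding S_def by auto
          have "\<not> q < p" using no3[OF q pX(1) ab(2) _ pX(2)] by blast
          then have qp: "p < q" using pq by simp
          show ?thesis
          proof (cases "q = b")
            case True then show ?thesis unfolding S_def by simp
          next
            case qb: False
            show ?thesis
            proof (cases "p = a")
              case True then show ?thesis using caseB q qp qb by auto
            next
              case False
              then have P4 unfolding P4_def using q pX ab qp qb by blast
              then show ?thesis using nP by simp
            qed
          qed
        qed
      qed (use ab in \<open>auto simp: S_def\<close>)
      have "po_Max X = {b}"
      proof (intro set_eqI iffI)
        fix x assume "x \<in> po_Max X"
        then have "x \<in> X" "\<not> (\<exists>y\<in>X. x < y)" unfolding po_Max_def by auto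
        then show "x \<in> {b}" using \<open>X \<subseteq> S\<close> ab(2) unfolding S_def by auto
      next
        fix x assume "x \<in> {b}"
        then have "x = b" by simp
        moreover have "\<not> (\<exists>y\<in>X. b < y)"
        proof
          assume "\<exists>y\<in>X. b < y"
          then obtain y where y: "y \<in> X" "b < y" by blast
          then have "y \<in> S" using \<open>X \<subseteq> S\<close> by blast
          then show False using y unfolding S_def by auto
        qed
        ultimately show "x \<in> po_Max X" unfolding po_Max_def using ab by simp
      qed
      then show False using n1 by simp
    next
      case notB: False
      obtain c where c: "c \<in> X" "c < b" "c \<noteq> a" using notA by blast
      obtain d where d: "d \<in> X" "a < d" "d \<noteq> b" using notB by blast
      have P4 unfolding P4_def using c d ab by blast
      then show False using nP by simp
    qed
  qed
qed

lemma swap_bad: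
  assumes P4 shows "\<exists>\<theta>. bij_betw \<theta> (po_B X) (po_B X) \<and> \<theta> \<notin> setP X"
proof -
  obtain x1 y1 x2 y2 where h: "x1 \<in> X" "y1 \<in> X" "x2 \<in> X" "y2 \<in> X"
     "x1 < y1" "x2 < y1" "x2 < y2" "x1 \<noteq> x2" "y1 \<noteq> y2" using assms unfolding P4_def by blast
  define \<theta> where "\<theta> = (\<lambda>e. if e = (x1, y1) then (x2, y1) else if e = (x2, y1) then (x1, y1) else e)"
  have B: "(x1, y1) \<in> po_B X" "(x2, y1) \<in> po_B X" "(x2, y2) \<in> po_B X" using h unfolding po_B_def by auto
  have ne: "(x1, y1) \<noteq> (x2, y1)" using h(8) by simp
  have inv: "\<theta> (\<theta> e) = e" for e
  proof -
    consider "e = (x1, y1)" | "e = (x2, y1)" | "e \<noteq> (x1, y1)" "e \<noteq> (x2, y1)" by blast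
    then show ?thesis
    proof cases
      case 1 then show ?thesis unfolding \<theta>_def using ne by simp
    next
      case 2 then show ?thesis unfolding \<theta>_def using ne by simp
    next
      case 3 then show ?thesis unfolding \<theta>_def by simp
    qed
  qed
  have inB: "\<theta> e \<in> po_B X" if "e \<in> po_B X" for e
    unfolding \<theta>_def using B that by simp
  have img: "\<theta> ` po_B X \<subseteq> po_B X" using inB by blast
  have bij: "bij_betw \<theta> (po_B X) (po_B X)"
    by (rule bij_betw_byWitness[where f' = \<theta>]) (simp add: inv, simp add: inv, rule img, rule img)
  have v1: "\<theta> (x2, y1) = (x1, y1)" unfolding \<theta>_def using h(8) by simp
  have v2: "\<theta> (x2, y2) = (x2, y2)" unfolding \<theta>_def using h(8,9) by simp
  have "\<theta> \<notin> setP X"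
  proof
    assume "\<theta> \<in> setP X"
    then have d: "(\<exists>lam. bij_betw lam X X \<and> (\<forall>x\<in>X. \<forall>y\<in>X. x \<le> y \<longleftrightarrow> lam x \<le> lam y) \<and>
          (\<forall>x\<in>X. \<forall>y\<in>X. x < y \<longrightarrow> \<theta> (x, y) = (lam x, lam y))) \<or>
      (\<exists>lam. bij_betw lam X X \<and> (\<forall>x\<in>X. \<forall>y\<in>X. x \<le> y \<longleftrightarrow> lam y \<le> lam x) \<and>
          (\<forall>x\<in>X. \<forall>y\<in>X. x < y \<longrightarrow> \<theta> (x, y) = (lam y, lam x)))"
      unfolding setP_def mem_Collect_eq by (rule conjunct2)
    show False
    proof (rule disjE[OF d])
      assume "\<exists>lam. bij_betw lam X X \<and> (\<forall>x\<in>X. \<forall>y\<in>X. x \<le> y \<longleftrightarrow> lam x \<le> lam y) \<and>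
          (\<forall>x\<in>X. \<forall>y\<in>X. x < y \<longrightarrow> \<theta> (x, y) = (lam x, lam y))"
      then obtain lam where A: "\<forall>x\<in>X. \<forall>y\<in>X. x < y \<longrightarrow> \<theta> (x, y) = (lam x, lam y)" by blast
      have e1: "\<theta> (x2, y1) = (lam x2, lam y1)"
        using bspec[OF bspec[OF A h(3)] h(2)] h(6) by (rule mp)
      have e2: "\<theta> (x2, y2) = (lam x2, lam y2)"
        using bspec[OF bspec[OF A h(3)] h(4)] h(7) by (rule mp)
      have "(x1, y1) = (lam x2, lam y1)" by (rule trans[OF sym[OF v1] e1])
      then have "x1 = lam x2" by (rule Pair_inject) 
      moreover have "(x2, y2) = (lam x2, lam y2)" by (rule trans[OF sym[OF v2] e2])
      then have "x2 = lam x2" by (rule Pair_inject)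
      ultimately show False using h(8) by (simp only:)
    next
      assume "\<exists>lam. bij_betw lam X X \<and> (\<forall>x\<in>X. \<forall>y\<in>X. x \<le> y \<longleftrightarrow> lam y \<le> lam x) \<and>
          (\<forall>x\<in>X. \<forall>y\<in>X. x < y \<longrightarrow> \<theta> (x, y) = (lam y, lam x))"
      then obtain lam where A: "\<forall>x\<in>X. \<forall>y\<in>X. x < y \<longrightarrow> \<theta> (x, y) = (lam y, lam x)" by blast
      have e1: "\<theta> (x2, y1) = (lam y1, lam x2)"
        using bspec[OF bspec[OF A h(3)] h(2)] h(6) by (rule mp)
      have e2: "\<theta> (x2, y2) = (lam y2, lam x2)"
        using bspec[OF bspec[OF A h(3)] h(4)] h(7) by (rule mp)
      have "(x1, y1) = (lam y1, lam x2)" by (rule trans[OF sym[OF v1] e1])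
      then have "y1 = lam x2" by (rule Pair_inject) 
      moreover have "(x2, y2) = (lam y2, lam x2)" by (rule trans[OF sym[OF v2] e2])
      then have "y2 = lam x2" by (rule Pair_inject)
      ultimately show False using h(9) by (simp only:)
    qed
  qed
  then show ?thesis using bij by blast
qed

end

theorem corollary4p7:
  fixes X :: "'a::order set"
  assumes "finite X"
    and "po_connected X"
    and "po_length X = 1"
    and "\<not> contains_weak_crown X"
  shows "setAM X = setP X \<longleftrightarrow> card (po_Min X) = 1 \<or> card (po_Max X) = 1"
proof -
  interpret tposet X using assms by unfold_locales
  have PB: "setP X \<subseteq> {\<theta>. bij_betw \<theta> (po_B X) (po_B X)}" unfolding setP_def by blast
  show ?thesis
  proof
    assume eq: "setAM X = setP X"
    show "card (po_Min X) = 1 \<or> card (po_Max X) = 1"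
    proof (rule ccontr)
      assume n: "\<not> (card (po_Min X) = 1 \<or> card (po_Max X) = 1)"
      then have P4 using P4_or_star by blast
      then obtain \<theta> where "bij_betw \<theta> (po_B X) (po_B X)" "\<theta> \<notin> setP X" using swap_bad by blast
      then show False using eq AM_eq by blast
    qed
  next
    assume c: "card (po_Min X) = 1 \<or> card (po_Max X) = 1"
    have "{\<theta>. bij_betw \<theta> (po_B X) (po_B X)} \<subseteq> setP X"
    proof
      fix \<theta> assume "\<theta> \<in> {\<theta>. bij_betw \<theta> (po_B X) (po_B X)}"
      then have b: "bij_betw \<theta> (po_B X) (po_B X)" by simp
      from c show "\<theta> \<in> setP X"
      proof
        assume "card (po_Min X) = 1"
        then obtain m where "po_Min X = {m}" by (rule card_1_singletonE)
        then show ?thesis using star_min b by blast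
      next
        assume "card (po_Max X) = 1"
        then obtain m where "po_Max X = {m}" by (rule card_1_singletonE)
        then show ?thesis using star_max b by blast
      qed
    qed
    then show "setAM X = setP X" using PB AM_eq by blast
  qed
qed

end
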